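(* Let $n,x$ be integers with $1<x<n$, so that $G=C_{2n}(x,1,n)$ is a $5$-regular circulant graph. If $n\equiv x\equiv 0 \pmod 3$ and $x>\tfrac{2n}{3}$, then $G$ is word-representable.
   Context: Two distinct letters $x,y$ alternate in a word $w$ if, after deleting all other letters from $w$, the resulting word is of the form $xyxy\cdots$ or $yxyx\cdots$ (of even or odd length). A graph $G=(V,E)$ is word-representable if there is a word $w$ over the alphabet $V$, containing every letter of $V$ at least once, such that for all distinct $x,y\in V$, $xy\in E$ if and only if $x$ and $y$ alternate in $w$. For an integer $m$ and a set $R$ of positive integers each at most $m/2$, the circulant graph $C_m(R)$ has vertex set $\{0,1,\dots,m-1\}$, with $i$ and $j$ adjacent iff $\min(|i-j|,\,m-|i-j|)\in R$. $C_{2n}(x,1,n)$ denotes the circulant graph on $2n$ vertices with jump set $\{1,x,n\}$; it is $5$-regular exactly when $1<x<n$. *)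

theory Defs
  imports Main
begin

definition alternate :: "'a list \<Rightarrow> 'a \<Rightarrow> 'a \<Rightarrow> bool" where
  "alternate w x y \<longleftrightarrow>
     (let u = filter (\<lambda>z. z = x \<or> z = y) w in
        \<forall>i. Suc i < length u \<longrightarrow> u ! i \<noteq> u ! Suc i)"

definition word_representable :: "'a set \<Rightarrow> ('a \<Rightarrow> 'a \<Rightarrow> bool) \<Rightarrow> bool" where
  "word_representable V E \<longleftrightarrow>
     (\<exists>w. set w = V \<and>
        (\<forall>x\<in>V. \<forall>y\<in>V. x \<noteq> y \<longrightarrow> (E x y \<longleftrightarrow> alternate w x y)))"

definition circ_vertices :: "nat \<Rightarrow> nat set" where
  "circ_vertices m = {0..<m}"

definition circ_adj :: "nat \<Rightarrow> nat set \<Rightarrow> nat \<Rightarrow> nat \<Rightarrow> bool" where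
  "circ_adj m R i j \<longleftrightarrow> i < m \<and> j < m \<and> i \<noteq> j \<and>
     (let d = (if i \<le> j then j - i else i - j) in min d (m - d) \<in> R)"

end

theory Submission
  imports Defs
begin

lemma alternate_succ: "alternate w x y \<longleftrightarrow> successively (\<noteq>) (filter (\<lambda>z. z = x \<or> z = y) w)"
  unfolding alternate_def Let_def successively_conv_nth by simp

lemma alternate_sym: "alternate w x y \<longleftrightarrow> alternate w y x"
  proof -
  have "(\<lambda>z. z = x \<or> z = y) = (\<lambda>z. z = y \<or> z = x)" by auto
  then show ?thesis unfolding alternate_succ by simp
qed

lemma filter_two:
  assumes "y \<noteq> z" "y < N" "z < N"
  shows "filter (\<lambda>u. u = y \<or> u = z) [0..<N] = (if y < z then [y, z] else [z, y])"
proof (rule sorted_distinct_set_unique)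
  show "set (filter (\<lambda>u. u = y \<or> u = z) [0..<N]) = set (if y < z then [y, z] else [z, y])"
    using assms by auto
qed (use assms in \<open>auto intro: sorted_wrt_filter\<close>)

lemma filter_two_Q:
  assumes "y \<noteq> z" "y < N" "z < N"
  shows "filter (\<lambda>u. u = y \<or> u = z) (filter Q [0..<N]) = filter Q (if y < z then [y, z] else [z, y])"
proof -
  have "filter (\<lambda>u. u = y \<or> u = z) (filter Q [0..<N]) = filter Q (filter (\<lambda>u. u = y \<or> u = z) [0..<N])"
    by (simp add: filter_filter conj_commute)
  then show ?thesis using filter_two[OF assms] by simp
qed

definition blk :: "nat \<Rightarrow> (nat \<Rightarrow> nat \<Rightarrow> bool) \<Rightarrow> (nat \<Rightarrow> nat) \<Rightarrow> nat \<Rightarrow> nat list" where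
"blk N E col t =
  filter (\<lambda>u. col u = col t \<and> t < u) [0..<N] @
  filter (\<lambda>u. col u = (col t + 1) mod 3 \<and> \<not> E t u) [0..<N] @ [t] @
  filter (\<lambda>u. col u = (col t + 1) mod 3 \<and> E t u) [0..<N] @
  filter (\<lambda>u. col u = (col t + 2) mod 3 \<and> E t u) [0..<N] @ [t] @
  filter (\<lambda>u. col u = (col t + 2) mod 3 \<and> \<not> E t u) [0..<N] @
  filter (\<lambda>u. col u = col t \<and> u < t) [0..<N]"

lemma lex_rank:
  fixes a b t y N :: nat
  assumes "t < N" "y < N"
  shows "a * N + t < b * N + y \<longleftrightarrow> a < b \<or> (a = b \<and> t < y)"
proof
  assume h: "a * N + t < b * N + y"
  show "a < b \<or> (a = b \<and> t < y)"
  proof (rule ccontr)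
    assume "\<not> ?thesis"
    then have "b < a \<or> (a = b \<and> y \<le> t)" by auto
    then show False
    proof
      assume "b < a"
      then have "Suc b * N \<le> a * N" by (intro mult_le_mono1) simp
      then have "b * N + N \<le> a * N" by simp
      then show False using h assms by linarith
    qed (use h in auto)
  qed
next
  assume "a < b \<or> (a = b \<and> t < y)"
  then show "a * N + t < b * N + y"
  proof
    assume "a < b"
    then have "Suc a * N \<le> b * N" by (intro mult_le_mono1) simp
    then have "a * N + N \<le> b * N" by simp
    then show ?thesis using assms by linarith
  qed auto
qed

lemma piece_other:
  assumes "y < N" "z < N" "t < N" "t \<noteq> y" "t \<noteq> z" "col y < col z" "col z < 3" "col t < 3"
  shows "filter (\<lambda>u. u = y \<or> u = z) (blk N E col t) =
     (if col t < col y \<or> (col t = col y \<and> t < y) \<or> col z < col t \<or> (col t = col z \<and> z < t)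
      then [y, z] else [z, y])"
proof -
  have yz: "y \<noteq> z" using assms by auto
  have cy: "col y = 0 \<and> col z = 1 \<or> col y = 0 \<and> col z = 2 \<or> col y = 1 \<and> col z = 2" using assms by arith
  have ct: "col t = 0 \<or> col t = 1 \<or> col t = 2" using assms by arith
  show ?thesis
    unfolding blk_def filter_append
    apply (simp only: filter_two_Q[OF yz assms(1,2)])
    using cy ct assms(4,5) by (elim disjE conjE; cases "y < z"; simp)
qed

lemma piece_self:
  assumes "t < N" "s < N" "t \<noteq> s" "E t s" "col t \<noteq> col s" "col t < 3" "col s < 3"
  shows "filter (\<lambda>u. u = t \<or> u = s) (blk N E col t) = [t, s, t]"
proof -
  have cs: "col s = (col t + 1) mod 3 \<or> col s = (col t + 2) mod 3" using assms(5-7) by arith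
  have c1: "col t \<noteq> (col t + 1) mod 3" "col t \<noteq> (col t + 2) mod 3" using assms(6) by arith+
  have c2: "(col t + 1) mod 3 \<noteq> (col t + 2) mod 3" by arith
  show ?thesis
    unfolding blk_def filter_append
    apply (simp only: filter_two_Q[OF assms(3,1,2)])
    using cs c1 c2 assms(3,4) by (cases "t < s"; auto)
qed

lemma piece_nonedge:
  assumes "t < N" "s < N" "t \<noteq> s" "\<not> E t s" "col t < 3"
  shows "\<exists>A B. filter (\<lambda>u. u = t \<or> u = s) (blk N E col t) = A @ [t, t] @ B"
proof -
  have c1: "col t \<noteq> (col t + 1) mod 3" "col t \<noteq> (col t + 2) mod 3" using assms(5) by arith+
  have "filter (\<lambda>u. u = t \<or> u = s) (filter (\<lambda>u. col u = (col t + 1) mod 3 \<and> E t u) [0..<N]) = []"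
       "filter (\<lambda>u. u = t \<or> u = s) (filter (\<lambda>u. col u = (col t + 2) mod 3 \<and> E t u) [0..<N]) = []"
    by (simp_all only: filter_two_Q[OF assms(3,1,2)]) (use c1 assms(4) in auto)
  then have "filter (\<lambda>u. u = t \<or> u = s) (blk N E col t) =
    (filter (\<lambda>u. u = t \<or> u = s) (filter (\<lambda>u. col u = col t \<and> t < u) [0..<N]) @
     filter (\<lambda>u. u = t \<or> u = s) (filter (\<lambda>u. col u = (col t + 1) mod 3 \<and> \<not> E t u) [0..<N])) @ [t, t] @
    (filter (\<lambda>u. u = t \<or> u = s) (filter (\<lambda>u. col u = (col t + 2) mod 3 \<and> \<not> E t u) [0..<N]) @
     filter (\<lambda>u. u = t \<or> u = s) (filter (\<lambda>u. col u = col t \<and> u < t) [0..<N]))"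
    unfolding blk_def filter_append by (simp only: append_assoc append_Nil filter.simps if_True simp_thms) simp
  then show ?thesis by blast
qed

definition F :: "nat \<Rightarrow> (nat \<Rightarrow> nat \<Rightarrow> bool) \<Rightarrow> (nat \<Rightarrow> nat) \<Rightarrow> nat \<Rightarrow> nat list" where
"F N E col r = (if col (r mod N) = r div N then blk N E col (r mod N) else [])"

definition wrd :: "nat \<Rightarrow> (nat \<Rightarrow> nat \<Rightarrow> bool) \<Rightarrow> (nat \<Rightarrow> nat) \<Rightarrow> nat list" where
"wrd N E col = concat (map (F N E col) [0..<3*N])"

lemma inv_step:
  assumes "successively (\<noteq>) S" "S \<noteq> [] \<Longrightarrow> last S = a"
    and "p = [] \<and> b = a \<or> (p \<noteq> [] \<and> successively (\<noteq>) p \<and> hd p \<noteq> a \<and> last p = b)"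
  shows "successively (\<noteq>) (S @ p) \<and> (S @ p \<noteq> [] \<longrightarrow> last (S @ p) = b)"
  using assms by (auto simp: successively_append_iff)

lemma rank_mod:
  assumes "t < (N::nat)"
  shows "(c * N + t) mod N = t" "(c * N + t) div N = c"
  using assms by auto

lemma edge_alt:
  assumes yN: "y < N" and zN: "z < N" and cyz: "col y < col z" and cz: "col z < 3"
    and cols: "\<And>u. u < N \<Longrightarrow> col u < 3" and E: "E y z" "E z y"
  shows "successively (\<noteq>) (filter (\<lambda>u. u = y \<or> u = z) (wrd N E col))"
proof -
  define P where "P = (\<lambda>u::nat. u = y \<or> u = z)"
  define ry where "ry = col y * N + y"
  define rz where "rz = col z * N + z"
  define cnd where "cnd = (\<lambda>r. if ry < r \<and> r \<le> rz then y else z)"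
  have yz: "y \<noteq> z" using cyz by auto
  have ryz: "ry < rz" unfolding ry_def rz_def using lex_rank[OF yN zN] cyz by auto
  have Nz: "0 < N" using yN by auto
  have "\<forall>r. r \<le> 3 * N \<longrightarrow> successively (\<noteq>) (filter P (concat (map (F N E col) [0..<r]))) \<and>
     (filter P (concat (map (F N E col) [0..<r])) \<noteq> [] \<longrightarrow> last (filter P (concat (map (F N E col) [0..<r]))) = cnd r)"
  proof (intro allI)
    fix r show "r \<le> 3 * N \<longrightarrow> successively (\<noteq>) (filter P (concat (map (F N E col) [0..<r]))) \<and>
     (filter P (concat (map (F N E col) [0..<r])) \<noteq> [] \<longrightarrow> last (filter P (concat (map (F N E col) [0..<r]))) = cnd r)"
    proof (induction r)
      case 0
      then show ?case by simp
    next
      case (Suc r)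
      show ?case
      proof
        assume r3: "Suc r \<le> 3 * N"
        define S where "S = filter P (concat (map (F N E col) [0..<r]))"
        define p where "p = filter P (F N E col r)"
        have IH: "successively (\<noteq>) S" "S \<noteq> [] \<Longrightarrow> last S = cnd r"
          using Suc r3 unfolding S_def by auto
        have eq: "filter P (concat (map (F N E col) [0..<Suc r])) = S @ p"
          unfolding S_def p_def by simp
        define t where "t = r mod N"
        have tN: "t < N" unfolding t_def using Nz by simp
        have piece: "p = [] \<and> cnd (Suc r) = cnd r \<or> (p \<noteq> [] \<and> successively (\<noteq>) p \<and> hd p \<noteq> cnd r \<and> last p = cnd (Suc r))"
        proof (cases "col t = r div N")
          case False
          have "r \<noteq> ry" "r \<noteq> rz" using False yN zN unfolding t_def ry_def rz_def by auto
          then have "cnd (Suc r) = cnd r" unfolding cnd_def by auto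
          moreover have "p = []" unfolding p_def F_def using False t_def by simp
          ultimately show ?thesis by simp
        next
          case True
          have rt: "r = col t * N + t" using True unfolding t_def by (metis div_mult_mod_eq)
          have pb: "p = filter P (blk N E col t)" unfolding p_def F_def using True t_def by simp
          show ?thesis
          proof (cases "t = y")
            case True
            then have "r = ry" using rt ry_def by simp
            moreover have "p = [y, z, y]" using pb True piece_self[of y N z E col, OF yN zN yz E(1)] cyz cz
              unfolding P_def by simp
            ultimately show ?thesis using ryz yz unfolding cnd_def by auto
          next
            case tny: False
            show ?thesis
            proof (cases "t = z")
              case True
              then have "r = rz" using rt rz_def by simp
              moreover have "(\<lambda>u::nat. u = y \<or> u = z) = (\<lambda>u. u = z \<or> u = y)" by auto
              moreover have "p = [z, y, z]" using pb True piece_self[of z N y E col, OF zN yN yz[symmetric] E(2)] cyz cz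
                calculation(2) unfolding P_def by simp
              ultimately show ?thesis using ryz yz unfolding cnd_def by auto
            next
              case tnz: False
              have ct: "col t < 3" using cols tN by simp
              have pe: "p = (if col t < col y \<or> (col t = col y \<and> t < y) \<or> col z < col t \<or> (col t = col z \<and> z < t)
                 then [y, z] else [z, y])"
                using pb piece_other[OF yN zN tN tny tnz cyz cz ct] unfolding P_def by simp
              have l1: "r < ry \<longleftrightarrow> col t < col y \<or> (col t = col y \<and> t < y)"
                unfolding rt ry_def using lex_rank[OF tN yN] by simp
              have l2: "rz < r \<longleftrightarrow> col z < col t \<or> (col t = col z \<and> z < t)"
                unfolding rt rz_def using lex_rank[OF zN tN] by auto
              have "r \<noteq> ry" "r \<noteq> rz" using tny tnz rt yN zN tN unfolding ry_def rz_def
                by (metis rank_mod(1))+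
              then show ?thesis using pe l1 l2 yz unfolding cnd_def by auto
            qed
          qed
        qed
        show "successively (\<noteq>) (filter P (concat (map (F N E col) [0..<Suc r]))) \<and>
          (filter P (concat (map (F N E col) [0..<Suc r])) \<noteq> [] \<longrightarrow>
           last (filter P (concat (map (F N E col) [0..<Suc r]))) = cnd (Suc r))"
          unfolding eq using inv_step[OF IH piece] by blast
      qed
    qed
  qed
  then show ?thesis unfolding wrd_def P_def by blast
qed

lemma rank_lt:
  fixes y N :: nat and col :: "nat \<Rightarrow> nat"
  assumes "y < N" "col y < 3"
  shows "col y * N + y < 3 * N"
  using lex_rank[of y N 0 "col y" 3] assms by simp

lemma nonedge_alt:
  fixes y z N :: nat and col :: "nat \<Rightarrow> nat"
  assumes yN: "y < N" and zN: "z < N" and yz: "y \<noteq> z" and cy: "col y < 3" and nE: "\<not> E y z"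
  shows "\<not> successively (\<noteq>) (filter (\<lambda>u. u = y \<or> u = z) (wrd N E col))"
proof -
  define ry where "ry = col y * N + y"
  have r3: "ry < 3 * N" unfolding ry_def using rank_lt[of y N col, OF yN cy] .
  have split: "[0..<3*N] = [0..<ry] @ ry # [Suc ry..<3*N]"
  proof -
    have "[0..<3*N] = [0..<ry] @ [ry..<3*N]"
      using upt_add_eq_append[of 0 ry "3*N - ry"] r3 by simp
    also have "[ry..<3*N] = ry # [Suc ry..<3*N]" using r3 upt_conv_Cons by blast
    finally show ?thesis .
  qed
  have Fy: "F N E col ry = blk N E col y"
    unfolding F_def ry_def using rank_mod[OF yN] by simp
  obtain A B where AB: "filter (\<lambda>u. u = y \<or> u = z) (blk N E col y) = A @ [y, y] @ B"
    using piece_nonedge[where t=y and s=z and N=N and E=E and col=col, OF yN zN yz nE cy] by blast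
  have "filter (\<lambda>u. u = y \<or> u = z) (wrd N E col) =
     (filter (\<lambda>u. u = y \<or> u = z) (concat (map (F N E col) [0..<ry])) @ A) @ [y, y] @
     (B @ filter (\<lambda>u. u = y \<or> u = z) (concat (map (F N E col) [Suc ry..<3*N])))"
    unfolding wrd_def split using Fy AB by simp
  then show ?thesis by (simp add: successively_append_iff)
qed

lemma set_blk: "t < (N::nat) \<Longrightarrow> set (blk N E col t) \<subseteq> {0..<N}" "t \<in> set (blk N E col t)"
  unfolding blk_def by auto

lemma set_wrd:
  fixes N :: nat and col :: "nat \<Rightarrow> nat"
  assumes "\<And>u. u < N \<Longrightarrow> col u < 3"
  shows "set (wrd N E col) = {0..<N}"
proof
  show "set (wrd N E col) \<subseteq> {0..<N}"
  proof
    fix u assume "u \<in> set (wrd N E col)"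
    then obtain r where r: "r < 3 * N" "u \<in> set (F N E col r)" unfolding wrd_def by auto
    then have "0 < N" by auto
    then have "r mod N < N" by simp
    then show "u \<in> {0..<N}" using r set_blk(1)[of "r mod N" N E col] unfolding F_def
      by (auto split: if_splits)
  qed
next
  show "{0..<N} \<subseteq> set (wrd N E col)"
  proof
    fix u assume u: "u \<in> {0..<N}"
    then have uN: "u < N" by simp
    define r where "r = col u * N + u"
    have "r < 3 * N" unfolding r_def using rank_lt[of u N col, OF uN assms[OF uN]] .
    moreover have "F N E col r = blk N E col u" unfolding F_def r_def using rank_mod[OF uN] by simp
    ultimately show "u \<in> set (wrd N E col)" unfolding wrd_def using set_blk(2)[of u N E col]
      by force
  qed
qed

lemma col3_wr:
  fixes N :: nat and E :: "nat \<Rightarrow> nat \<Rightarrow> bool" and col :: "nat \<Rightarrow> nat"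
  assumes sym: "\<And>u v. E u v \<Longrightarrow> E v u"
    and cols: "\<And>u. u < N \<Longrightarrow> col u < 3"
    and prp: "\<And>u v. u < N \<Longrightarrow> v < N \<Longrightarrow> E u v \<Longrightarrow> col u \<noteq> col v"
  shows "word_representable {0..<N} E"
  unfolding word_representable_def
proof (intro exI conjI ballI impI)
  show "set (wrd N E col) = {0..<N}" using set_wrd cols by blast
  fix a b assume a: "a \<in> {0..<N}" and b: "b \<in> {0..<N}" and ab: "a \<noteq> b"
  have aN: "a < N" and bN: "b < N" using a b by auto
  show "E a b \<longleftrightarrow> alternate (wrd N E col) a b"
  proof
    assume e: "E a b"
    have "col a \<noteq> col b" using prp[OF aN bN e] .
    then have "col a < col b \<or> col b < col a" by arith
    then show "alternate (wrd N E col) a b"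
    proof
      assume "col a < col b"
      then show ?thesis unfolding alternate_succ
        using edge_alt[where y=a and z=b and N=N and col=col and E=E, OF aN bN _ cols[OF bN]] cols e sym by blast
    next
      assume "col b < col a"
      then show ?thesis unfolding alternate_sym[of _ a b] unfolding alternate_succ
        using edge_alt[where y=b and z=a and N=N and col=col and E=E, OF bN aN _ cols[OF aN]] cols e sym by blast
    qed
  next
    assume "alternate (wrd N E col) a b"
    then show "E a b" unfolding alternate_succ
      using nonedge_alt[where y=a and z=b and N=N and col=col and E=E, OF aN bN ab cols[OF aN]] by blast
  qed
qed

lemma mod3_shift:
  fixes w s :: nat
  assumes "s mod 3 \<noteq> 0"
  shows "(w + s) mod 3 \<noteq> w mod 3"
  using assms by presburger

lemma jump:
  fixes a e L :: nat
  assumes L: "0 < L" and e: "e = 1 \<or> (L < e \<and> e < 2 * L \<and> e mod 3 = 0)"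
  shows "(a + e + (a + e) div L) mod 3 \<noteq> (a + a div L) mod 3"
proof -
  define q where "q = (a mod L + e) div L"
  have ae: "a + e = (a mod L + e) + (a div L) * L" using div_mult_mod_eq[of a L] by linarith
  have dq: "(a + e) div L = a div L + q"
    unfolding q_def ae using L div_mult_self1[of L "a mod L + e" "a div L"] by simp
  have m: "a mod L < L" using L by simp
  have eq: "(e + q) mod 3 \<noteq> 0"
    using e
  proof
    assume e1: "e = 1"
    have "a mod L + e < 2 * L" using m e1 L by linarith
    then have "q < 2" unfolding q_def by (rule less_mult_imp_div_less)
    then have "q = 0 \<or> q = 1" by arith
    then show ?thesis using e1 by auto
  next
    assume h: "L < e \<and> e < 2 * L \<and> e mod 3 = 0"
    have "a mod L + e < 3 * L" using m h by linarith
    then have q3: "q < 3" unfolding q_def by (rule less_mult_imp_div_less)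
    have "L \<le> a mod L + e" using h by simp
    then have "0 < q" unfolding q_def using L div_greater_zero_iff by blast
    then have "q = 1 \<or> q = 2" using q3 by arith
    moreover have "e mod 3 = 0" using h by simp
    ultimately show ?thesis by presburger
  qed
  have e2: "a + e + (a + e) div L = (a + a div L) + (e + q)" unfolding dq by simp
  show ?thesis unfolding e2 by (rule mod3_shift[OF eq])
qed

lemma circ_sym: "circ_adj m R u v \<Longrightarrow> circ_adj m R v u"
  unfolding circ_adj_def Let_def by (auto split: if_splits)

lemma circ_proper_lt:
  fixes n x u v :: nat
  assumes "1 < x" "x < n" "n mod 3 = 0" "x mod 3 = 0" "3 * x > 2 * n"
    and uv: "u < v" and adj: "circ_adj (2 * n) {1, x, n} u v"
  shows "(u + u div (2 * n div 3)) mod 3 \<noteq> (v + v div (2 * n div 3)) mod 3"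
proof -
  obtain k where nk: "n = 3 * k" using assms(3) by auto
  define L where "L = 2 * k"
  have LL: "2 * n div 3 = L" unfolding L_def nk by simp
  have L0: "0 < L" using assms(1,2) nk L_def by simp
  have vN: "v < 2 * n" and d: "min (v - u) (2 * n - (v - u)) \<in> {1, x, n}"
    using adj uv unfolding circ_adj_def Let_def by auto
  have econd: "\<And>e. e \<in> {1, x, n} \<Longrightarrow> e = 1 \<or> (L < e \<and> e < 2 * L \<and> e mod 3 = 0)"
    using assms(1-5) nk L_def by auto
  show ?thesis
  proof (cases "v - u \<le> 2 * n - (v - u)")
    case True
    then have e: "v - u \<in> {1, x, n}" using d by (simp add: min_def)
    have vu: "u + (v - u) = v" using uv by simp
    have "(u + (v - u) + (u + (v - u)) div L) mod 3 \<noteq> (u + u div L) mod 3"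
      by (rule jump[OF L0 econd[OF e]])
    then show ?thesis unfolding vu LL by simp
  next
    case False
    define e where "e = 2 * n - (v - u)"
    have "min (v - u) (2 * n - (v - u)) = e" unfolding e_def using False by (simp only: min_def if_False)
    then have e: "e \<in> {1, x, n}" using d by simp
    have ve: "v + e = u + 3 * L" unfolding e_def L_def using uv vN nk by simp
    have "(u + 3 * L) div L = u div L + 3" using L0 by simp
    then have eq: "v + e + (v + e) div L = (u + u div L) + 3 * (L + 1)" unfolding ve by simp
    have "(v + e + (v + e) div L) mod 3 = (u + u div L) mod 3" unfolding eq by (rule mod_mult_self2)
    moreover have "(v + e + (v + e) div L) mod 3 \<noteq> (v + v div L) mod 3"
      by (rule jump[OF L0 econd[OF e]])
    ultimately show ?thesis unfolding LL by simp
  qed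
qed

theorem theorem22:
  fixes n x :: nat
  assumes "1 < x" and "x < n"
    and "n mod 3 = 0" and "x mod 3 = 0"
    and "3 * x > 2 * n"
  shows "word_representable (circ_vertices (2 * n)) (circ_adj (2 * n) {1, x, n})"
proof -
  define col where "col = (\<lambda>i::nat. (i + i div (2 * n div 3)) mod 3)"
  have "word_representable {0..<2 * n} (circ_adj (2 * n) {1, x, n})"
  proof (rule col3_wr[where col = col])
    show "\<And>u v. circ_adj (2 * n) {1, x, n} u v \<Longrightarrow> circ_adj (2 * n) {1, x, n} v u"
      by (rule circ_sym)
    show "\<And>u. u < 2 * n \<Longrightarrow> col u < 3" unfolding col_def by simp
    show "col u \<noteq> col v" if "u < 2 * n" "v < 2 * n" "circ_adj (2 * n) {1, x, n} u v" for u v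
    proof -
      have "u \<noteq> v" using that(3) unfolding circ_adj_def by auto
      then have "u < v \<or> v < u" by arith
      then show ?thesis
      proof
        assume "u < v" then show ?thesis
          using circ_proper_lt[OF assms _ that(3)] unfolding col_def by blast
      next
        assume "v < u" then show ?thesis
          using circ_proper_lt[OF assms _ circ_sym[OF that(3)]] unfolding col_def by metis
      qed
    qed
  qed
  then show ?thesis unfolding circ_vertices_def .
qed

end
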